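(* Let $\psi(u,v)$ be a conjunction of difference constraints between two integer variables $u,v$ (of the forms $u\le v+d$ and $v\le u+d$, $d\in\mathbb{Z}$) which contains a conjunct $u\le v-c$ for some $c>0$. Let $n\ge3$. Then $\exists S_3,\dots,S_{n-1}.\ \bigwedge_{2\le i\le n-1}\Big(S_i=S_{i+1}\cup\{\min(S_i)\}\wedge\max(S_i)=\max(S_{i+1})\wedge\psi(\min(S_i),\min(S_{i+1}))\Big)$ is equivalent to $S_n\neq\emptyset\wedge S_2\setminus S_n\neq\emptyset\wedge S_n\subseteq S_2\wedge|S_2\setminus S_n|=n-2\wedge\max(S_2\setminus S_n)<\min(S_n)\wedge\forall y,z.\ \big(\mathsf{succ}((S_2\setminus S_n)\cup\{\min(S_n)\},y,z)\rightarrow\psi(y,z)\big)$.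
   Context: Set variables range over finite subsets of $\mathbb{Z}$, integer variables over $\mathbb{Z}$; $\min,\max$ of the empty set are undefined and atoms containing undefined terms are false. $\mathsf{succ}(S,x,y)$ abbreviates $x\in S\wedge y\in S\wedge x<y\wedge\forall z\in S.\,(z\le x\vee y\le z)$, i.e. $y$ is the successor of $x$ in $S$. $|\cdot|$ is cardinality. *)

theory Defs
  imports Main
begin

type_synonym dconstr = "bool \<times> int"

definition holds_dc :: "dconstr \<Rightarrow> int \<Rightarrow> int \<Rightarrow> bool" where
  "holds_dc c u v = (if fst c then u \<le> v + snd c else v \<le> u + snd c)"

definition psi :: "dconstr list \<Rightarrow> int \<Rightarrow> int \<Rightarrow> bool" where
  "psi cs u v = (\<forall>c\<in>set cs. holds_dc c u v)"

definition succ :: "int set \<Rightarrow> int \<Rightarrow> int \<Rightarrow> bool" where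
  "succ S x y = (x \<in> S \<and> y \<in> S \<and> x < y \<and> (\<forall>z\<in>S. z \<le> x \<or> y \<le> z))"

end

theory Submission
  imports Defs
begin

definition stp :: "dconstr list \<Rightarrow> int set \<Rightarrow> int set \<Rightarrow> bool" where
  "stp cs A A' = ((A \<noteq> {} \<and> A = A' \<union> {Min A})
                \<and> (A \<noteq> {} \<and> A' \<noteq> {} \<and> Max A = Max A')
                \<and> (A \<noteq> {} \<and> A' \<noteq> {} \<and> psi cs (Min A) (Min A')))"

definition RR :: "dconstr list \<Rightarrow> int set \<Rightarrow> int set \<Rightarrow> nat \<Rightarrow> bool" where
  "RR cs A B k = (B \<noteq> {} \<and> A - B \<noteq> {} \<and> B \<subseteq> A \<and> card (A - B) = k
          \<and> Max (A - B) < Min B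
          \<and> (\<forall>y z. succ ((A - B) \<union> {Min B}) y z \<longrightarrow> psi cs y z))"

fun chain :: "dconstr list \<Rightarrow> nat \<Rightarrow> int set \<Rightarrow> int set \<Rightarrow> bool" where
  "chain cs 0 A B = (A = B \<and> finite A)"
| "chain cs (Suc k) A B = (finite A \<and> (\<exists>A'. stp cs A A' \<and> chain cs k A' B))"

lemma psi_lt:
  assumes "(True, -c) \<in> set cs" "c > 0" "psi cs u v" shows "u < v"
  using assms unfolding psi_def holds_dc_def by force

lemma base:
  assumes h: "(True, -c) \<in> set cs" "c > 0" and fin: "finite A" "finite B"
  shows "stp cs A B \<longleftrightarrow> RR cs A B 1"
proof
  assume s: "stp cs A B"
  hence ne: "A \<noteq> {}" "B \<noteq> {}" and AB: "A = B \<union> {Min A}" and p: "psi cs (Min A) (Min B)"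
    unfolding stp_def by blast+
  have lt: "Min A < Min B" using psi_lt[OF h p] .
  have "Min A \<notin> B"
  proof
    assume "Min A \<in> B"
    hence "Min B \<le> Min A" using fin(2) by simp
    with lt show False by simp
  qed
  note notin = this
  have mAin: "Min A \<in> A" using fin(1) ne(1) by simp
  have D: "A - B = {Min A}"
  proof
    show "A - B \<subseteq> {Min A}"
    proof
      fix x assume x: "x \<in> A - B"
      hence "x \<in> B \<union> {Min A}" by (subst AB[symmetric]) blast
      thus "x \<in> {Min A}" using x by blast
    qed
    show "{Min A} \<subseteq> A - B" using mAin notin by blast
  qed
  have sub: "B \<subseteq> A" by (subst AB) blast
  have X: "(A - B) \<union> {Min B} = {Min A, Min B}" unfolding D by blast
  have sc: "\<forall>y z. succ ((A - B) \<union> {Min B}) y z \<longrightarrow> psi cs y z"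
  proof (intro allI impI)
    fix y z assume "succ ((A - B) \<union> {Min B}) y z"
    hence yz: "y \<in> {Min A, Min B}" "z \<in> {Min A, Min B}" "y < z" unfolding X succ_def by blast+
    hence "y = Min A" "z = Min B" using lt by auto
    thus "psi cs y z" using p by simp
  qed
  have c1: "card (A - B) = 1" unfolding D by simp
  have m1: "Max (A - B) < Min B" unfolding D using lt by simp
  have n1: "A - B \<noteq> {}" unfolding D by simp
  show "RR cs A B 1" unfolding RR_def using ne(2) n1 sub c1 m1 sc by blast
next
  assume r: "RR cs A B 1"
  then obtain a where D: "A - B = {a}" unfolding RR_def by (auto simp: card_1_singleton_iff)
  from r have ne: "B \<noteq> {}" and sub: "B \<subseteq> A" and lt: "a < Min B"
    and sc: "\<And>y z. succ ((A - B) \<union> {Min B}) y z \<Longrightarrow> psi cs y z"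
    using D unfolding RR_def by auto
  have A: "A = insert a B" using D sub by auto
  have "Min A = min a (Min B)" unfolding A using fin(2) ne by (rule Min_insert)
  hence mA: "Min A = a" using lt by simp
  have "Min B \<in> B" using fin(2) ne by simp
  hence "Min B \<le> Max B" using fin(2) by simp
  moreover have "Max A = max a (Max B)" unfolding A using fin(2) ne by (rule Max_insert)
  ultimately have MA: "Max A = Max B" using lt by simp
  have "succ ((A - B) \<union> {Min B}) a (Min B)" using D lt unfolding succ_def by auto
  hence "psi cs a (Min B)" by (rule sc)
  thus "stp cs A B" unfolding stp_def using mA MA A ne by auto
qed


lemma stepl:
  assumes h: "(True, -c) \<in> set cs" "c > 0" and fin: "finite A" "finite B" and k: "k \<ge> 1"
  shows "(\<exists>A'. stp cs A A' \<and> RR cs A' B k) \<longleftrightarrow> RR cs A B (Suc k)"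
proof
  assume "\<exists>A'. stp cs A A' \<and> RR cs A' B k"
  then obtain A' where s: "stp cs A A'" and r: "RR cs A' B k" by blast
  define m where "m = Min A"
  from s have ne: "A \<noteq> {}" "A' \<noteq> {}" and AA: "A = A' \<union> {m}" and p: "psi cs m (Min A')"
    unfolding stp_def m_def by blast+
  have finA': "finite A'" using AA fin by auto
  have lt: "m < Min A'" using psi_lt[OF h p] .
  have gt: "\<And>x. x \<in> A' \<Longrightarrow> m < x" using lt finA' by (meson Min_le less_le_trans)
  from r have neB: "B \<noteq> {}" and T'ne: "A' - B \<noteq> {}" and sub: "B \<subseteq> A'" and cd: "card (A' - B) = k"
    and mx: "Max (A' - B) < Min B" and sc: "\<And>y z. succ ((A' - B) \<union> {Min B}) y z \<Longrightarrow> psi cs y z"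
    unfolding RR_def by auto
  have mnot: "m \<notin> A'" using gt by blast
  have D: "A - B = insert m (A' - B)" using AA sub mnot by auto
  have finT': "finite (A' - B)" using finA' by auto
  have cardD: "card (A - B) = Suc k" using D mnot finT' cd by simp
  have "Max (A' - B) \<in> A' - B" using finT' T'ne by (rule Max_in)
  hence mlt: "m < Max (A' - B)" using gt by blast
  have MaxD: "Max (A - B) = Max (A' - B)" using D finT' T'ne mlt by (simp add: max_def)
  have minB: "Min B \<in> B" using fin neB by simp
  have minA'B: "Min A' \<in> A' - B"
  proof -
    obtain t where t: "t \<in> A' - B" using T'ne by blast
    have "t \<le> Max (A' - B)" using finT' t by simp
    hence "t < Min B" using mx by simp
    have "Min A' \<le> t" using finA' t by simp
    moreover have "Min A' \<in> A'" using finA' ne by simp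
    moreover have "\<And>b. b \<in> B \<Longrightarrow> Min B \<le> b" using fin by simp
    ultimately show ?thesis using \<open>t < Min B\<close> by fastforce
  qed
  show "RR cs A B (Suc k)" unfolding RR_def
  proof (intro conjI allI impI)
    fix y z assume sy: "succ ((A - B) \<union> {Min B}) y z"
    show "psi cs y z"
    proof (cases "y = m")
      case True
      have zX: "z \<in> (A - B) \<union> {Min B}" and yz: "m < z"
        and al: "\<forall>w\<in>(A - B) \<union> {Min B}. w \<le> m \<or> z \<le> w"
        using sy True unfolding succ_def by auto
      have "z \<in> A'" using zX yz D sub minB by auto
      hence "Min A' \<le> z" using finA' by simp
      moreover have "Min A' \<in> (A - B) \<union> {Min B}" using minA'B D by auto
      hence "z \<le> Min A'" using al lt by force
      ultimately have "z = Min A'" by simp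
      thus ?thesis using True p by simp
    next
      case False
      have yX: "y \<in> (A - B) \<union> {Min B}" and zX: "z \<in> (A - B) \<union> {Min B}" and yz: "y < z"
        and al: "\<forall>w\<in>(A - B) \<union> {Min B}. w \<le> y \<or> z \<le> w"
        using sy unfolding succ_def by auto
      have y': "y \<in> (A' - B) \<union> {Min B}" using yX False D by auto
      have "y \<in> A'" using y' sub minB by auto
      hence "m < y" using gt by simp
      hence "z \<noteq> m" using yz by simp
      hence z': "z \<in> (A' - B) \<union> {Min B}" using zX D by auto
      have "succ ((A' - B) \<union> {Min B}) y z" unfolding succ_def using y' z' yz al D by auto
      thus ?thesis by (rule sc)
    qed
  qed (use neB D sub AA cardD MaxD mx in auto)
next
  assume r: "RR cs A B (Suc k)"
  define T where "T = A - B"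
  from r have neB: "B \<noteq> {}" and Tne: "T \<noteq> {}" and sub: "B \<subseteq> A" and cd: "card T = Suc k"
    and mx: "Max T < Min B" and sc: "\<And>y z. succ (T \<union> {Min B}) y z \<Longrightarrow> psi cs y z"
    unfolding RR_def T_def by auto
  have finT: "finite T" using fin T_def by auto
  define m where "m = Min T"
  define A' where "A' = A - {m}"
  have mT: "m \<in> T" using finT Tne m_def by simp
  have mleT: "\<And>t. t \<in> T \<Longrightarrow> m \<le> t" using finT m_def by simp
  have "m \<le> Max T" using finT mT by simp
  hence mB: "m < Min B" using mx by simp
  have Bge: "\<And>b. b \<in> B \<Longrightarrow> Min B \<le> b" using fin by simp
  have minB: "Min B \<in> B" using fin neB by simp
  have A_cases: "\<And>x. x \<in> A \<Longrightarrow> x \<in> B \<or> x \<in> T" using T_def by auto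
  have mA: "m \<in> A" using mT T_def by auto
  have Agt: "\<And>x. x \<in> A' \<Longrightarrow> m < x"
  proof -
    fix x assume x: "x \<in> A'"
    hence "x \<in> A" "x \<noteq> m" using A'_def by auto
    thus "m < x" using A_cases mleT Bge mB by force
  qed
  have MinA: "Min A = m"
  proof (rule Min_eqI[OF fin(1) _ mA])
    fix y assume "y \<in> A"
    then consider "y \<in> B" | "y \<in> T" using A_cases by blast
    thus "m \<le> y" proof cases
      case 1 thus ?thesis using Bge[OF 1] mB by simp
    next
      case 2 thus ?thesis using mleT by simp
    qed
  qed
  have T'eq: "A' - B = T - {m}" using A'_def T_def by auto
  have cdT': "card (T - {m}) = k" using cd mT finT by simp
  have T'ne: "T - {m} \<noteq> {}"
  proof
    assume "T - {m} = {}"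
    hence "card (T - {m}) = card ({}::int set)" by (rule arg_cong)
    hence "card (T - {m}) = 0" by (simp only: card.empty)
    with cdT' k show False by simp
  qed
  have finT': "finite (T - {m})" using finT by simp
  have "Max (T - {m}) \<le> Max T" using finT T'ne by (simp add: Max_mono)
  hence mx': "Max (T - {m}) < Min B" using mx by simp
  have mnB: "m \<notin> B"
  proof
    assume "m \<in> B"
    hence "Min B \<le> m" by (rule Bge)
    with mB show False by simp
  qed
  have subB': "B \<subseteq> A'" using sub mnB unfolding A'_def by blast
  have RA': "RR cs A' B k" unfolding RR_def
  proof (intro conjI allI impI)
    fix y z assume sy: "succ ((A' - B) \<union> {Min B}) y z"
    have yX: "y \<in> (T - {m}) \<union> {Min B}" and zX: "z \<in> (T - {m}) \<union> {Min B}" and yz: "y < z"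
      and al: "\<forall>w\<in>(T - {m}) \<union> {Min B}. w \<le> y \<or> z \<le> w"
      using sy T'eq unfolding succ_def by auto
    have "m < y" using yX mB mleT by force
    hence "succ (T \<union> {Min B}) y z" unfolding succ_def using yX zX yz al by auto
    thus "psi cs y z" by (rule sc)
  qed (use neB T'ne T'eq subB' cdT' mx' in auto)
  have A'ne: "A' \<noteq> {}" using T'ne T'eq by auto
  have finA': "finite A'" using fin A'_def by simp
  have AA: "A = insert m A'" using mA A'_def by auto
  obtain x where x: "x \<in> A'" using A'ne by blast
  have "x \<le> Max A'" using finA' x by simp
  moreover have "m < x" by (rule Agt[OF x])
  ultimately have mlt: "m < Max A'" by linarith
  have "Max A = max m (Max A')" unfolding AA using finA' A'ne by (rule Max_insert)
  hence MaxA: "Max A = Max A'" using mlt by simp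
  define z where "z = Min A'"
  have zA': "z \<in> A'" using finA' A'ne z_def by simp
  have zle: "\<And>w. w \<in> A' \<Longrightarrow> z \<le> w" using finA' z_def by simp
  have zX: "z \<in> T \<union> {Min B}"
  proof (cases "z \<in> B")
    case True
    hence "Min B \<le> z" using Bge by simp
    moreover have "Min B \<in> A'" using subB' minB by blast
    hence "z \<le> Min B" by (rule zle)
    ultimately show ?thesis by simp
  next
    case False
    have "z \<in> A" using zA' unfolding A'_def by blast
    hence "z \<in> T" unfolding T_def using False by blast
    thus ?thesis by blast
  qed
  have "succ (T \<union> {Min B}) m z" unfolding succ_def
  proof (intro conjI ballI)
    fix w assume w: "w \<in> T \<union> {Min B}"
    show "w \<le> m \<or> z \<le> w"
    proof (cases "w = m")
      case False
      have "w \<in> T \<or> w \<in> B" using w minB by blast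
      hence "w \<in> A'"
      proof
        assume "w \<in> T" thus ?thesis using False unfolding A'_def T_def by blast
      next
        assume "w \<in> B" thus ?thesis using subB' by blast
      qed
      thus ?thesis using zle by simp
    qed simp
  next
    show "m \<in> T \<union> {Min B}" using mT by blast
  next
    show "z \<in> T \<union> {Min B}" by (rule zX)
  next
    show "m < z" by (rule Agt[OF zA'])
  qed
  hence p: "psi cs m z" by (rule sc)
  have Ane: "A \<noteq> {}" using mA by blast
  have AU: "A = A' \<union> {m}" using AA by (metis insert_is_Un sup_commute)
  have "stp cs A A'" unfolding stp_def MinA
    by (intro conjI Ane AU A'ne MaxA p[unfolded z_def])
  thus "\<exists>A'. stp cs A A' \<and> RR cs A' B k" using RA' by blast
qed


lemma stp_fin: "stp cs A A' \<Longrightarrow> finite A \<Longrightarrow> finite A'"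
  unfolding stp_def by (metis finite_Un)

lemma chain_R:
  assumes h: "(True, -c) \<in> set cs" "c > 0"
  shows "finite A \<Longrightarrow> finite B \<Longrightarrow> k \<ge> 1 \<Longrightarrow> chain cs k A B \<longleftrightarrow> RR cs A B k"
proof (induction k arbitrary: A)
  case 0 thus ?case by simp
next
  case (Suc k)
  show ?case
  proof (cases "k = 0")
    case True
    have "chain cs (Suc k) A B \<longleftrightarrow> stp cs A B" using True Suc.prems by auto
    also have "\<dots> \<longleftrightarrow> RR cs A B 1" by (rule base[OF h Suc.prems(1,2)])
    finally show ?thesis using True by simp
  next
    case False
    have "chain cs (Suc k) A B \<longleftrightarrow> (\<exists>A'. stp cs A A' \<and> chain cs k A' B)" using Suc.prems by simp
    also have "\<dots> \<longleftrightarrow> (\<exists>A'. stp cs A A' \<and> RR cs A' B k)"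
    proof -
      have "\<And>A'. stp cs A A' \<Longrightarrow> chain cs k A' B = RR cs A' B k"
        using Suc.IH[OF stp_fin[OF _ Suc.prems(1)] Suc.prems(2)] False by simp
      thus ?thesis by blast
    qed
    also have "\<dots> \<longleftrightarrow> RR cs A B (Suc k)" using stepl[OF h Suc.prems(1,2)] False by simp
    finally show ?thesis .
  qed
qed

lemma chain_S:
  "(\<exists>S. S a = A \<and> S (a + k) = B \<and> (\<forall>i. a \<le> i \<and> i \<le> a + k \<longrightarrow> finite (S i))
      \<and> (\<forall>i. a \<le> i \<and> i < a + k \<longrightarrow> stp cs (S i) (S (Suc i)))) \<longleftrightarrow> chain cs k A B"
proof (induction k arbitrary: a A)
  case 0
  show ?case
  proof
    assume "chain cs 0 A B"
    hence AB: "A = B" and fA: "finite A" by auto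
    show "\<exists>S. S a = A \<and> S (a + 0) = B \<and> (\<forall>i. a \<le> i \<and> i \<le> a + 0 \<longrightarrow> finite (S i))
      \<and> (\<forall>i. a \<le> i \<and> i < a + 0 \<longrightarrow> stp cs (S i) (S (Suc i)))"
      by (rule exI[of _ "\<lambda>_. A"]) (auto simp: AB[symmetric] fA)
  next
    assume "\<exists>S. S a = A \<and> S (a + 0) = B \<and> (\<forall>i. a \<le> i \<and> i \<le> a + 0 \<longrightarrow> finite (S i))
      \<and> (\<forall>i. a \<le> i \<and> i < a + 0 \<longrightarrow> stp cs (S i) (S (Suc i)))"
    then obtain S where "S a = A" "S (a + 0) = B" "\<forall>i. a \<le> i \<and> i \<le> a + 0 \<longrightarrow> finite (S i)" by blast
    hence "A = B" "finite A" by auto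
    thus "chain cs 0 A B" by simp
  qed
next
  case (Suc k)
  show ?case
  proof
    assume "\<exists>S. S a = A \<and> S (a + Suc k) = B \<and> (\<forall>i. a \<le> i \<and> i \<le> a + Suc k \<longrightarrow> finite (S i))
      \<and> (\<forall>i. a \<le> i \<and> i < a + Suc k \<longrightarrow> stp cs (S i) (S (Suc i)))"
    then obtain S where S: "S a = A" "S (a + Suc k) = B" "\<forall>i. a \<le> i \<and> i \<le> a + Suc k \<longrightarrow> finite (S i)"
      "\<forall>i. a \<le> i \<and> i < a + Suc k \<longrightarrow> stp cs (S i) (S (Suc i))" by blast
    have "\<exists>S'. S' (Suc a) = S (Suc a) \<and> S' (Suc a + k) = B \<and> (\<forall>i. Suc a \<le> i \<and> i \<le> Suc a + k \<longrightarrow> finite (S' i))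
      \<and> (\<forall>i. Suc a \<le> i \<and> i < Suc a + k \<longrightarrow> stp cs (S' i) (S' (Suc i)))"
    proof (intro exI[of _ S] conjI allI impI)
      show "S (Suc a + k) = B" using S(2) by simp
    next
      fix i assume i: "Suc a \<le> i \<and> i \<le> Suc a + k"
      hence "a \<le> i \<and> i \<le> a + Suc k" by simp
      thus "finite (S i)" using S(3) by blast
    next
      fix i assume i: "Suc a \<le> i \<and> i < Suc a + k"
      hence "a \<le> i \<and> i < a + Suc k" by simp
      thus "stp cs (S i) (S (Suc i))" using S(4) by blast
    qed (rule refl)
    hence "chain cs k (S (Suc a)) B" using Suc.IH[of "Suc a" "S (Suc a)"] by blast
    moreover have "stp cs A (S (Suc a))"
    proof -
      have "a \<le> a \<and> a < a + Suc k" by simp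
      hence "stp cs (S a) (S (Suc a))" using S(4) by blast
      thus ?thesis using S(1) by simp
    qed
    moreover have "finite A"
    proof -
      have "a \<le> a \<and> a \<le> a + Suc k" by simp
      hence "finite (S a)" using S(3) by blast
      thus ?thesis using S(1) by simp
    qed
    ultimately show "chain cs (Suc k) A B" by auto
  next
    assume "chain cs (Suc k) A B"
    then obtain A' where fA: "finite A" and st: "stp cs A A'" and ch: "chain cs k A' B" by auto
    obtain S where S: "S (Suc a) = A'" "S (Suc a + k) = B" "\<forall>i. Suc a \<le> i \<and> i \<le> Suc a + k \<longrightarrow> finite (S i)"
      "\<forall>i. Suc a \<le> i \<and> i < Suc a + k \<longrightarrow> stp cs (S i) (S (Suc i))"
      using Suc.IH[of "Suc a" A'] ch by blast
    define S' where "S' = S(a := A)"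
    have "S' a = A \<and> S' (a + Suc k) = B \<and> (\<forall>i. a \<le> i \<and> i \<le> a + Suc k \<longrightarrow> finite (S' i))
      \<and> (\<forall>i. a \<le> i \<and> i < a + Suc k \<longrightarrow> stp cs (S' i) (S' (Suc i)))"
    proof (intro conjI allI impI)
      show "S' a = A" unfolding S'_def by simp
    next
      show "S' (a + Suc k) = B" unfolding S'_def using S(2) by simp
    next
      fix i assume i: "a \<le> i \<and> i \<le> a + Suc k"
      show "finite (S' i)"
      proof (cases "i = a")
        case True thus ?thesis unfolding S'_def using fA by simp
      next
        case False
        hence "Suc a \<le> i \<and> i \<le> Suc a + k" using i by simp
        hence "finite (S i)" using S(3) by blast
        thus ?thesis unfolding S'_def using False by simp
      qed
    next
      fix i assume i: "a \<le> i \<and> i < a + Suc k"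
      show "stp cs (S' i) (S' (Suc i))"
      proof (cases "i = a")
        case True thus ?thesis unfolding S'_def using st S(1) by simp
      next
        case False
        hence "Suc a \<le> i \<and> i < Suc a + k" using i by simp
        hence "stp cs (S i) (S (Suc i))" using S(4) by blast
        thus ?thesis unfolding S'_def using False i by simp
      qed
    qed
    thus "\<exists>S. S a = A \<and> S (a + Suc k) = B \<and> (\<forall>i. a \<le> i \<and> i \<le> a + Suc k \<longrightarrow> finite (S i))
      \<and> (\<forall>i. a \<le> i \<and> i < a + Suc k \<longrightarrow> stp cs (S i) (S (Suc i)))" by blast
  qed
qed

theorem mainTheorem6:
  fixes cs :: "dconstr list" and c :: int and n :: nat and S2 Sn :: "int set"
  assumes "(True, - c) \<in> set cs" and "c > 0" and "n \<ge> 3"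
    and "finite S2" and "finite Sn"
  shows "(\<exists>S :: nat \<Rightarrow> int set. S 2 = S2 \<and> S n = Sn
            \<and> (\<forall>i. 2 \<le> i \<and> i \<le> n \<longrightarrow> finite (S i))
            \<and> (\<forall>i. 2 \<le> i \<and> i \<le> n - 1 \<longrightarrow>
                  (S i \<noteq> {} \<and> S i = S (Suc i) \<union> {Min (S i)})
                \<and> (S i \<noteq> {} \<and> S (Suc i) \<noteq> {} \<and> Max (S i) = Max (S (Suc i)))
                \<and> (S i \<noteq> {} \<and> S (Suc i) \<noteq> {} \<and> psi cs (Min (S i)) (Min (S (Suc i))))))
     \<longleftrightarrow>
         (Sn \<noteq> {} \<and> S2 - Sn \<noteq> {} \<and> Sn \<subseteq> S2 \<and> card (S2 - Sn) = n - 2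
          \<and> Max (S2 - Sn) < Min Sn
          \<and> (\<forall>y z. succ ((S2 - Sn) \<union> {Min Sn}) y z \<longrightarrow> psi cs y z))"
proof -
  have h1: "2 + (n - 2) = n" using assms(3) by simp
  have le: "\<And>i. (i \<le> n - 1) = (i < n)" using assms(3) by auto
  have "(\<exists>S. S 2 = S2 \<and> S (2 + (n - 2)) = Sn \<and> (\<forall>i. 2 \<le> i \<and> i \<le> 2 + (n - 2) \<longrightarrow> finite (S i))
      \<and> (\<forall>i. 2 \<le> i \<and> i < 2 + (n - 2) \<longrightarrow> stp cs (S i) (S (Suc i)))) \<longleftrightarrow> chain cs (n - 2) S2 Sn"
    by (rule chain_S)
  hence "(\<exists>S :: nat \<Rightarrow> int set. S 2 = S2 \<and> S n = Sn
            \<and> (\<forall>i. 2 \<le> i \<and> i \<le> n \<longrightarrow> finite (S i))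
            \<and> (\<forall>i. 2 \<le> i \<and> i \<le> n - 1 \<longrightarrow>
                  (S i \<noteq> {} \<and> S i = S (Suc i) \<union> {Min (S i)})
                \<and> (S i \<noteq> {} \<and> S (Suc i) \<noteq> {} \<and> Max (S i) = Max (S (Suc i)))
                \<and> (S i \<noteq> {} \<and> S (Suc i) \<noteq> {} \<and> psi cs (Min (S i)) (Min (S (Suc i))))))
     \<longleftrightarrow> chain cs (n - 2) S2 Sn"
    by (simp only: h1 le stp_def)
  also have "\<dots> \<longleftrightarrow> RR cs S2 Sn (n - 2)"
    by (rule chain_R[OF assms(1,2,4,5)]) (use assms(3) in simp)
  finally show ?thesis unfolding RR_def .
qed

end
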